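(* Let $T$ be a countably infinite tournament. Then either $T$ has a quasi-kernel, or there exist vertices $x,y\in V(T)$ such that $V(T)=\Gamma^-(x)\cup\Gamma^+(y)$.
   Context: A tournament is a digraph in which every pair of distinct vertices is joined by exactly one directed edge. $\Gamma^+(v)$ and $\Gamma^-(v)$ denote the sets of out-neighbours and in-neighbours of $v$; for a vertex set $V'$, $\Gamma^+(V')$ is the union of the out-neighbourhoods of its vertices and $\Gamma^+_2(V')=V'\cup\Gamma^+(V')\cup\Gamma^+(\Gamma^+(V'))$. A quasi-kernel is an independent set $Q$ with $\Gamma^+_2(Q)=V(T)$. *)

theory Defs
  imports Main "HOL-Library.Countable_Set"
begin

definition tournament :: "'a set \<Rightarrow> ('a \<Rightarrow> 'a \<Rightarrow> bool) \<Rightarrow> bool" where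
  "tournament V E \<longleftrightarrow>
     (\<forall>u v. E u v \<longrightarrow> u \<in> V \<and> v \<in> V) \<and>
     (\<forall>v. \<not> E v v) \<and>
     (\<forall>u\<in>V. \<forall>v\<in>V. u \<noteq> v \<longrightarrow> (E u v \<longleftrightarrow> \<not> E v u))"

definition out_nbhd :: "'a set \<Rightarrow> ('a \<Rightarrow> 'a \<Rightarrow> bool) \<Rightarrow> 'a \<Rightarrow> 'a set" where
  "out_nbhd V E v = {u \<in> V. E v u}"

definition in_nbhd :: "'a set \<Rightarrow> ('a \<Rightarrow> 'a \<Rightarrow> bool) \<Rightarrow> 'a \<Rightarrow> 'a set" where
  "in_nbhd V E v = {u \<in> V. E u v}"

definition out_nbhd_set :: "'a set \<Rightarrow> ('a \<Rightarrow> 'a \<Rightarrow> bool) \<Rightarrow> 'a set \<Rightarrow> 'a set" where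
  "out_nbhd_set V E S = (\<Union>v\<in>S. out_nbhd V E v)"

definition out_nbhd2 :: "'a set \<Rightarrow> ('a \<Rightarrow> 'a \<Rightarrow> bool) \<Rightarrow> 'a set \<Rightarrow> 'a set" where
  "out_nbhd2 V E S = S \<union> out_nbhd_set V E S \<union> out_nbhd_set V E (out_nbhd_set V E S)"

definition independent :: "'a set \<Rightarrow> ('a \<Rightarrow> 'a \<Rightarrow> bool) \<Rightarrow> 'a set \<Rightarrow> bool" where
  "independent V E Q \<longleftrightarrow> Q \<subseteq> V \<and> (\<forall>u\<in>Q. \<forall>v\<in>Q. \<not> E u v)"

definition quasi_kernel :: "'a set \<Rightarrow> ('a \<Rightarrow> 'a \<Rightarrow> bool) \<Rightarrow> 'a set \<Rightarrow> bool" where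
  "quasi_kernel V E Q \<longleftrightarrow> independent V E Q \<and> out_nbhd2 V E Q = V"

end

theory Submission
  imports Defs
begin

theorem mainTheorem9:
  fixes V :: "'a set" and E :: "'a \<Rightarrow> 'a \<Rightarrow> bool"
  assumes "tournament V E" and "countable V" and "infinite V"
  shows "(\<exists>Q. quasi_kernel V E Q) \<or>
         (\<exists>x\<in>V. \<exists>y\<in>V. V = in_nbhd V E x \<union> out_nbhd V E y)"
proof -
  have T1: "u \<in> V \<and> v \<in> V" if "E u v" for u v
    using assms(1) that unfolding tournament_def by blast
  have T2: "\<not> E v v" for v using assms(1) unfolding tournament_def by blast
  have T3: "E u v \<or> E v u" if "u \<in> V" "v \<in> V" "u \<noteq> v" for u v
    using assms(1) that unfolding tournament_def by blast
  show ?thesis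
  proof (cases "\<exists>x\<in>V. out_nbhd2 V E {x} = V")
    case True
    then obtain x where x: "x \<in> V" "out_nbhd2 V E {x} = V" by blast
    have "independent V E {x}" unfolding independent_def using x(1) T2 by simp
    then have "quasi_kernel V E {x}" unfolding quasi_kernel_def using x(2) by simp
    then show ?thesis by blast
  next
    case False
    from assms(3) obtain x where x: "x \<in> V" using infinite_imp_nonempty by blast
    have sub: "out_nbhd2 V E {x} \<subseteq> V"
      unfolding out_nbhd2_def out_nbhd_set_def out_nbhd_def using x by auto
    with False x obtain w where w: "w \<in> V" "w \<notin> out_nbhd2 V E {x}" by blast
    have o1: "out_nbhd_set V E {x} = out_nbhd V E x" unfolding out_nbhd_set_def by simp
    have wx1: "w \<noteq> x" using w(2) unfolding out_nbhd2_def by blast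
    have wx2: "\<not> E x w" using w unfolding out_nbhd2_def o1 out_nbhd_def by blast
    have wx: "E w x" using T3[OF w(1) x wx1] wx2 by blast
    have wu: "E w u" if "E x u" for u
    proof -
      have uV: "u \<in> V" using T1 that by blast
      have uo: "u \<in> out_nbhd_set V E {x}" using that uV
        unfolding out_nbhd_set_def out_nbhd_def by simp
      have "w \<noteq> u" using w(2) uo unfolding out_nbhd2_def by blast
      moreover have "\<not> E u w"
      proof
        assume "E u w"
        then have "w \<in> out_nbhd V E u" using w(1) unfolding out_nbhd_def by simp
        then have "w \<in> out_nbhd_set V E (out_nbhd_set V E {x})" using uo
          unfolding out_nbhd_set_def by blast
        then show False using w(2) unfolding out_nbhd2_def by blast
      qed
      ultimately show ?thesis using T3[OF w(1) uV] by blast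
    qed
    have "V \<subseteq> in_nbhd V E x \<union> out_nbhd V E w"
    proof
      fix v assume v: "v \<in> V"
      show "v \<in> in_nbhd V E x \<union> out_nbhd V E w"
      proof (cases "v = x")
        case True then show ?thesis using wx v unfolding out_nbhd_def by simp
      next
        case False
        then have "E v x \<or> E x v" using T3 v x by blast
        then show ?thesis using wu v unfolding in_nbhd_def out_nbhd_def by blast
      qed
    qed
    moreover have "in_nbhd V E x \<union> out_nbhd V E w \<subseteq> V"
      unfolding in_nbhd_def out_nbhd_def by blast
    ultimately have "V = in_nbhd V E x \<union> out_nbhd V E w" by blast
    then show ?thesis using x w by blast
  qed
qed

end
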